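(* Let $G$ be a planar graph embedded in the plane, let $F$ be a face of this embedding whose boundary is a cycle, and let $v_1,v_2,v_3,v_4 \in V(F)$ appear in this order along the boundary cycle of $F$. If $\max\{\mathrm{dist}_{G-E(F)}(v_1,v_3),\mathrm{dist}_{G-E(F)}(v_2,v_4)\}\leq 6$, then $\min\{\mathrm{dist}_{G-E(F)}(v_1,v_2),\mathrm{dist}_{G-E(F)}(v_3,v_4)\}\leq 6$.
   Context: $\mathrm{dist}_H(u,v)$ denotes the number of edges in a shortest $uv$-path in $H$ ($\infty$ if none exists). $V(F)$ and $E(F)$ denote the vertices and edges of the boundary cycle of $F$, and $G-E(F)$ is obtained from $G$ by deleting these edges. *)

theory Defs
  imports "HOL-Analysis.Analysis" "HOL-Library.Extended_Nat"
begin

definition simple_graph :: "'v set \<Rightarrow> 'v set set \<Rightarrow> bool" where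
  "simple_graph V E \<longleftrightarrow> finite V \<and>
     (\<forall>e\<in>E. \<exists>u v. u \<noteq> v \<and> e = {u, v} \<and> u \<in> V \<and> v \<in> V)"

definition is_walk :: "'v set \<Rightarrow> 'v set set \<Rightarrow> 'v list \<Rightarrow> bool" where
  "is_walk V E xs \<longleftrightarrow> xs \<noteq> [] \<and> set xs \<subseteq> V \<and>
     (\<forall>i. Suc i < length xs \<longrightarrow> {xs ! i, xs ! Suc i} \<in> E)"

definition graph_dist :: "'v set \<Rightarrow> 'v set set \<Rightarrow> 'v \<Rightarrow> 'v \<Rightarrow> enat" where
  "graph_dist V E u v = Inf {enat (length xs - 1) | xs.
       is_walk V E xs \<and> hd xs = u \<and> last xs = v}"

definition plane_embedding ::
  "'v set \<Rightarrow> 'v set set \<Rightarrow> ('v \<Rightarrow> complex) \<Rightarrow> ('v set \<Rightarrow> real \<Rightarrow> complex) \<Rightarrow> bool" where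
  "plane_embedding V E pos \<gamma> \<longleftrightarrow> inj_on pos V \<and>
     (\<forall>e\<in>E. arc (\<gamma> e) \<and>
        (\<exists>u v. e = {u, v} \<and> pathstart (\<gamma> e) = pos u \<and> pathfinish (\<gamma> e) = pos v) \<and>
        path_image (\<gamma> e) \<inter> pos ` V \<subseteq> pos ` e) \<and>
     (\<forall>e\<in>E. \<forall>e'\<in>E. e \<noteq> e' \<longrightarrow> path_image (\<gamma> e) \<inter> path_image (\<gamma> e') \<subseteq> pos ` (e \<inter> e'))"

definition drawing ::
  "'v set \<Rightarrow> 'v set set \<Rightarrow> ('v \<Rightarrow> complex) \<Rightarrow> ('v set \<Rightarrow> real \<Rightarrow> complex) \<Rightarrow> complex set" where
  "drawing V E pos \<gamma> = pos ` V \<union> (\<Union>e\<in>E. path_image (\<gamma> e))"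

definition cycle_edges :: "'v list \<Rightarrow> 'v set set" where
  "cycle_edges cs = {{cs ! i, cs ! ((i + 1) mod length cs)} | i. i < length cs}"

definition is_cycle :: "'v set \<Rightarrow> 'v set set \<Rightarrow> 'v list \<Rightarrow> bool" where
  "is_cycle V E cs \<longleftrightarrow> length cs \<ge> 3 \<and> distinct cs \<and> set cs \<subseteq> V \<and> cycle_edges cs \<subseteq> E"

definition face_bounded_by_cycle ::
  "'v set \<Rightarrow> 'v set set \<Rightarrow> ('v \<Rightarrow> complex) \<Rightarrow> ('v set \<Rightarrow> real \<Rightarrow> complex)
   \<Rightarrow> complex set \<Rightarrow> 'v list \<Rightarrow> bool" where
  "face_bounded_by_cycle V E pos \<gamma> F cs \<longleftrightarrow>
     F \<in> components (- drawing V E pos \<gamma>) \<and> is_cycle V E cs \<and>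
     frontier F = drawing (set cs) (cycle_edges cs) pos \<gamma>"

end

theory Submission
  imports Defs
begin


lemma conn_dich:
  assumes "connected S" "open U" "open W" "U \<inter> W = {}" "S \<subseteq> U \<union> W"
  shows "S \<subseteq> U \<or> S \<subseteq> W"
  using connectedD[OF assms(1,2,3)] assms(4,5) by blast

lemma closure_open_meet:
  assumes "x \<in> closure S" "open U" "x \<in> U" shows "S \<inter> U \<noteq> {}"
  using assms by (metis closure_iff_nhds_not_empty inf_commute order_refl)

lemma arc_interior:
  fixes g :: "real \<Rightarrow> 'a::real_normed_vector"
  assumes "arc g"
  shows "connected (path_image g - {pathstart g, pathfinish g})"
    "path_image g \<subseteq> closure (path_image g - {pathstart g, pathfinish g})"
    "path_image g - {pathstart g, pathfinish g} \<noteq> {}"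
proof -
  have inj: "inj_on g {0..1}" and cont: "continuous_on {0..1} g"
    using assms by (auto simp: arc_def path_def)
  have eq: "path_image g - {pathstart g, pathfinish g} = g ` {0<..<1}"
  proof
    show "path_image g - {pathstart g, pathfinish g} \<subseteq> g ` {0<..<1}"
    proof
      fix y assume "y \<in> path_image g - {pathstart g, pathfinish g}"
      then obtain t where t: "0 \<le> t" "t \<le> 1" "y = g t" "g t \<noteq> g 0" "g t \<noteq> g 1"
        by (auto simp: path_image_def pathstart_def pathfinish_def)
      then have "t \<noteq> 0" "t \<noteq> 1" by auto
      with t show "y \<in> g ` {0<..<1}" by auto
    qed
    show "g ` {0<..<1} \<subseteq> path_image g - {pathstart g, pathfinish g}"
    proof
      fix y assume "y \<in> g ` {0<..<1}"
      then obtain t where t: "0 < t" "t < 1" "y = g t" by auto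
      have "g t \<noteq> g 0" using inj_onD[OF inj, of t 0] t by auto
      moreover have "g t \<noteq> g 1" using inj_onD[OF inj, of t 1] t by auto
      ultimately show "y \<in> path_image g - {pathstart g, pathfinish g}"
        using t by (auto simp: path_image_def pathstart_def pathfinish_def)
    qed
  qed
  show "connected (path_image g - {pathstart g, pathfinish g})"
    unfolding eq
    by (rule connected_continuous_image) (auto intro: continuous_on_subset[OF cont])
  show "path_image g \<subseteq> closure (path_image g - {pathstart g, pathfinish g})"
    unfolding eq using continuous_image_closure_subset[OF cont, of "{0<..<1}"]
    by (simp add: closure_greaterThanLessThan path_image_def)
  show "path_image g - {pathstart g, pathfinish g} \<noteq> {}"
    unfolding eq by auto
qed

lemma clopen_eq:
  assumes "connected U" "open F" "F \<subseteq> U" "F \<noteq> {}" "frontier F \<inter> U = {}"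
  shows "F = U"
proof (rule ccontr)
  assume "F \<noteq> U"
  then have "U - F \<noteq> {}" using assms(3) by auto
  moreover have "U \<inter> F \<noteq> {}" using assms(3,4) by auto
  ultimately have "U \<inter> frontier F \<noteq> {}" using connected_Int_frontier[OF assms(1)] by blast
  then show False using assms(5) by blast
qed

lemma jordan2:
  fixes c1 c2 :: "real \<Rightarrow> complex"
  assumes "arc c1" "arc c2" "pathstart c1 = p" "pathfinish c1 = q"
    "pathstart c2 = p" "pathfinish c2 = q" "path_image c1 \<inter> path_image c2 = {p,q}"
  shows "inside (path_image c1 \<union> path_image c2) \<noteq> {}"
    "open (inside (path_image c1 \<union> path_image c2))"
    "connected (inside (path_image c1 \<union> path_image c2))"
    "outside (path_image c1 \<union> path_image c2) \<noteq> {}"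
    "open (outside (path_image c1 \<union> path_image c2))"
    "connected (outside (path_image c1 \<union> path_image c2))"
    "frontier (inside (path_image c1 \<union> path_image c2)) = path_image c1 \<union> path_image c2"
    "frontier (outside (path_image c1 \<union> path_image c2)) = path_image c1 \<union> path_image c2"
proof -
  have sp: "simple_path (c1 +++ reversepath c2)"
    using assms by (intro simple_path_join_loop) (auto simp: arc_reversepath)
  have pi: "path_image (c1 +++ reversepath c2) = path_image c1 \<union> path_image c2"
    using assms by (simp add: path_image_join)
  have cl: "pathfinish (c1 +++ reversepath c2) = pathstart (c1 +++ reversepath c2)"
    using assms by simp
  note J = Jordan_inside_outside[OF sp cl, unfolded pi]
  show "inside (path_image c1 \<union> path_image c2) \<noteq> {}"
    "open (inside (path_image c1 \<union> path_image c2))"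
    "connected (inside (path_image c1 \<union> path_image c2))"
    "outside (path_image c1 \<union> path_image c2) \<noteq> {}"
    "open (outside (path_image c1 \<union> path_image c2))"
    "connected (outside (path_image c1 \<union> path_image c2))"
    "frontier (inside (path_image c1 \<union> path_image c2)) = path_image c1 \<union> path_image c2"
    "frontier (outside (path_image c1 \<union> path_image c2)) = path_image c1 \<union> path_image c2"
    using J by blast+
qed

lemma closed_pi2: "arc c1 \<Longrightarrow> arc c2 \<Longrightarrow> closed (path_image c1 \<union> path_image (c2::real\<Rightarrow>complex))"
  by (simp add: arc_imp_path closed_Un closed_path_image)

lemma sub_alpha:
  fixes c1 c2 a :: "real \<Rightarrow> complex"
  assumes arcs: "arc c1" "arc c2" "arc a"
    and ends: "pathstart c1 = p" "pathfinish c1 = q" "pathstart c2 = p" "pathfinish c2 = q"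
      "pathstart a = p" "pathfinish a = q"
    and i12: "path_image c1 \<inter> path_image c2 = {p,q}"
    and i1a: "path_image c1 \<inter> path_image a = {p,q}"
    and i2a: "path_image c2 \<inter> path_image a = {p,q}"
    and Bo: "connected Bo" "Bo \<inter> (path_image c1 \<union> path_image c2 \<union> path_image a) = {}"
      "Bo \<inter> inside (path_image c1 \<union> path_image c2) = {}"
    and r: "r \<in> path_image c1" "r \<notin> path_image c2" "r \<notin> path_image a" "r \<in> closure Bo"
    and s: "s \<in> path_image c2 - {p,q}" "s \<in> closure Bo"
    and mid: "path_image c2 - {p,q} \<subseteq> inside (path_image c1 \<union> path_image a)"
  shows False
proof -
  let ?C1 = "path_image c1" and ?C2 = "path_image c2" and ?A = "path_image a"
  have pq: "p \<noteq> q" using arc_distinct_ends[OF arcs(1)] ends(1,2) by simp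
  have ne: "?C2 \<inter> inside (?C1 \<union> ?A) \<noteq> {}" using s(1) mid by blast
  obtain d1: "inside (?C1 \<union> ?C2) \<inter> inside (?A \<union> ?C2) = {}"
     and d2: "inside (?C1 \<union> ?C2) \<union> inside (?A \<union> ?C2) \<union> (?C2 - {p,q}) = inside (?C1 \<union> ?A)"
    using split_inside_simple_closed_curve[of c1 p q a c2] arcs ends pq i12 i1a i2a ne
    by (metis arc_imp_simple_path inf_commute)
  note J1 = jordan2[OF arcs(1,3) ends(1,2,5,6) i1a]
  have sin: "s \<in> inside (?C1 \<union> ?A)" using s(1) mid by blast
  have "Bo \<inter> inside (?C1 \<union> ?A) \<noteq> {}"
    using closure_open_meet[OF s(2) J1(2) sin] by blast
  moreover have "Bo \<subseteq> inside (?C1 \<union> ?A) \<union> outside (?C1 \<union> ?A)"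
    using Bo(2) by (auto simp: inside_Un_outside)
  ultimately have "Bo \<subseteq> inside (?C1 \<union> ?A)"
    using conn_dich[OF Bo(1) J1(2) J1(5) inside_Int_outside] inside_Int_outside[of "?C1 \<union> ?A"] by blast
  then have BI: "Bo \<subseteq> inside (?A \<union> ?C2)" using d2 Bo(2,3) by blast
  have "closure (inside (?A \<union> ?C2)) \<subseteq> inside (?A \<union> ?C2) \<union> (?A \<union> ?C2)"
    using frontier_inside_subset[OF closed_pi2[OF arcs(3,2)]] closure_Un_frontier by blast
  moreover have "r \<in> closure (inside (?A \<union> ?C2))" using r(4) BI closure_mono by blast
  ultimately have "r \<in> inside (?A \<union> ?C2)" using r by blast
  then have "r \<in> inside (?C1 \<union> ?A)" using d2 by blast
  then show False using r(1) inside_no_overlap by blast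
qed

lemma core:
  fixes c1 c2 a b :: "real \<Rightarrow> complex" and F :: "complex set"
  assumes arcs: "arc c1" "arc c2" "arc a" "arc b"
    and ends: "pathstart c1 = p" "pathfinish c1 = q" "pathstart c2 = p" "pathfinish c2 = q"
      "pathstart a = p" "pathfinish a = q"
    and i12: "path_image c1 \<inter> path_image c2 = {p,q}"
    and i1a: "path_image c1 \<inter> path_image a = {p,q}"
    and i2a: "path_image c2 \<inter> path_image a = {p,q}"
    and bs: "pathstart b \<in> path_image c1 - {p,q}" and bf: "pathfinish b \<in> path_image c2 - {p,q}"
    and ibc: "path_image b \<inter> (path_image c1 \<union> path_image c2) \<subseteq> {pathstart b, pathfinish b}"
    and iba: "path_image b \<inter> path_image a = {}"
    and F: "open F" "connected F" "F \<noteq> {}"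
      "F \<inter> (path_image c1 \<union> path_image c2 \<union> path_image a \<union> path_image b) = {}"
      "frontier F = path_image c1 \<union> path_image c2"
  shows False
proof -
  let ?C1 = "path_image c1" and ?C2 = "path_image c2" and ?A = "path_image a"
    and ?B = "path_image b"
  define r where "r = pathstart b"
  define s where "s = pathfinish b"
  define C where "C = ?C1 \<union> ?C2"
  define Ao where "Ao = ?A - {p,q}"
  define Bo where "Bo = ?B - {r,s}"
  have pq: "p \<noteq> q" using arc_distinct_ends[OF arcs(1)] ends(1,2) by simp
  note JC = jordan2[OF arcs(1,2) ends(1-4) i12, folded C_def]
  note J1 = jordan2[OF arcs(1,3) ends(1,2,5,6) i1a]
  note J2 = jordan2[OF arcs(2,3) ends(3,4,5,6) i2a]
  have IO: "inside C \<union> outside C = - C" "inside C \<inter> outside C = {}" by auto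
  have Ao1: "Ao \<subseteq> - C" using i1a i2a unfolding Ao_def C_def by blast
  have Ao2: "Ao \<inter> F = {}" using F(4) unfolding Ao_def by blast
  note Ao3 = arc_interior[OF arcs(3), unfolded ends(5,6), folded Ao_def]
  have Ao: "Ao \<subseteq> - C" "Ao \<inter> F = {}" "Ao \<noteq> {}" "connected Ao" "?A \<subseteq> closure Ao"
    using Ao1 Ao2 Ao3 by auto
  have rs1: "r \<in> ?C1 - {p,q}" "s \<in> ?C2 - {p,q}" using bs bf by (simp_all add: r_def s_def)
  have rsb: "r \<in> ?B" "s \<in> ?B" unfolding r_def s_def by (rule pathstart_in_path_image, rule pathfinish_in_path_image)
  have rs: "r \<in> ?C1 - {p,q}" "s \<in> ?C2 - {p,q}" "r \<notin> ?C2" "s \<notin> ?C1" "r \<notin> ?A" "s \<notin> ?A"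
  proof -
    show "r \<in> ?C1 - {p,q}" "s \<in> ?C2 - {p,q}" by (fact rs1)+
    show "r \<notin> ?C2" using rs1(1) i12 by (metis Diff_iff IntI)
    show "s \<notin> ?C1" using rs1(2) i12 by (metis Diff_iff IntI)
    show "r \<notin> ?A" using rsb(1) iba by (metis IntI empty_iff)
    show "s \<notin> ?A" using rsb(2) iba by (metis IntI empty_iff)
  qed
  have Bo1: "Bo \<subseteq> - C" using ibc unfolding Bo_def C_def r_def s_def by blast
  have Bo2: "Bo \<inter> F = {}" using F(4) unfolding Bo_def by blast
  have Bo6: "Bo \<inter> ?A = {}" using iba unfolding Bo_def by blast
  note Bo3 = arc_interior[OF arcs(4), folded r_def s_def, folded Bo_def]
  have Bo: "Bo \<subseteq> - C" "Bo \<inter> F = {}" "Bo \<noteq> {}" "connected Bo" "?B \<subseteq> closure Bo" "Bo \<inter> ?A = {}"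
    using Bo1 Bo2 Bo3 Bo6 by auto
  have rcl: "r \<in> closure Bo" "s \<in> closure Bo"
    using Bo(5) rsb by auto
  have FC: "F \<subseteq> - C" using F(4) unfolding C_def by blast
  have "F \<subseteq> inside C \<or> F \<subseteq> outside C"
    using conn_dich[OF F(2) JC(2) JC(5) IO(2)] IO(1) FC by blast
  then have FIO: "F = inside C \<or> F = outside C"
  proof
    assume "F \<subseteq> inside C"
    moreover have "frontier F \<inter> inside C = {}"
      using F(5) inside_no_overlap[of C] unfolding C_def by (simp add: Int_commute)
    ultimately have "F = inside C" by (intro clopen_eq[OF JC(3) F(1) _ F(3)])
    then show ?thesis by blast
  next
    assume "F \<subseteq> outside C"
    moreover have "frontier F \<inter> outside C = {}"
      using F(5) outside_no_overlap[of C] unfolding C_def by (simp add: Int_commute)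
    ultimately have "F = outside C" by (intro clopen_eq[OF JC(6) F(1) _ F(3)])
    then show ?thesis by blast
  qed
  show False
  proof (cases "F = outside C")
    case out: True
    have AoI: "Ao \<subseteq> inside C" using Ao(1,2) IO out by blast
    have BoI: "Bo \<subseteq> inside C" using Bo(1,2) IO out by blast
    have ne: "?A \<inter> inside (?C1 \<union> ?C2) \<noteq> {}" using AoI Ao(3) by (auto simp: Ao_def C_def)
    obtain d1: "inside (?C1 \<union> ?A) \<inter> inside (?C2 \<union> ?A) = {}"
       and d2: "inside (?C1 \<union> ?A) \<union> inside (?C2 \<union> ?A) \<union> (?A - {p,q}) = inside (?C1 \<union> ?C2)"
      using split_inside_simple_closed_curve[of c1 p q c2 a] arcs ends pq i12 i1a i2a ne
      by (metis arc_imp_simple_path inf_commute)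
    have "Bo \<subseteq> inside (?C1 \<union> ?A) \<union> inside (?C2 \<union> ?A)"
      using BoI Bo(6) d2 by (auto simp: C_def)
    then have "Bo \<subseteq> inside (?C1 \<union> ?A) \<or> Bo \<subseteq> inside (?C2 \<union> ?A)"
      using conn_dich[OF Bo(4) J1(2) J2(2) d1] by blast
    then show False
    proof
      assume BI: "Bo \<subseteq> inside (?C1 \<union> ?A)"
      have "closure (inside (?C1 \<union> ?A)) \<subseteq> inside (?C1 \<union> ?A) \<union> (?C1 \<union> ?A)"
        using frontier_inside_subset[OF closed_pi2[OF arcs(1,3)]] closure_Un_frontier by blast
      moreover have "s \<in> closure (inside (?C1 \<union> ?A))" using rcl BI closure_mono by blast
      ultimately have "s \<in> inside (?C1 \<union> ?A)" using rs by blast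
      then have "s \<in> inside C" using d2 by (auto simp: C_def)
      moreover have "s \<in> C" "r \<in> C" using rs by (auto simp: C_def)
      ultimately show False using inside_no_overlap[of C] by blast
    next
      assume BI: "Bo \<subseteq> inside (?C2 \<union> ?A)"
      have "closure (inside (?C2 \<union> ?A)) \<subseteq> inside (?C2 \<union> ?A) \<union> (?C2 \<union> ?A)"
        using frontier_inside_subset[OF closed_pi2[OF arcs(2,3)]] closure_Un_frontier by blast
      moreover have "r \<in> closure (inside (?C2 \<union> ?A))" using rcl BI closure_mono by blast
      ultimately have "r \<in> inside (?C2 \<union> ?A)" using rs by blast
      then have "r \<in> inside C" using d2 by (auto simp: C_def)
      moreover have "s \<in> C" "r \<in> C" using rs by (auto simp: C_def)
      ultimately show False using inside_no_overlap[of C] by blast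
    qed
  next
    case False
    then have inn: "F = inside C" using FIO by blast
    have AoO: "Ao \<subseteq> outside C" using Ao(1,2) IO inn by blast
    have BoO: "Bo \<inter> inside C = {}" using Bo(2) inn by blast
    have C2o: "connected (?C2 - {p,q})" "?C2 - {p,q} \<subseteq> - (?C1 \<union> ?A)"
      using arc_interior(1)[OF arcs(2)] ends(3,4) i12 i2a by auto
    have C1o: "connected (?C1 - {p,q})" "?C1 - {p,q} \<subseteq> - (?C2 \<union> ?A)"
      using arc_interior(1)[OF arcs(1)] ends(1,2) i12 i1a by auto
    have c2d: "?C2 - {p,q} \<subseteq> inside (?C1 \<union> ?A) \<or> ?C2 - {p,q} \<subseteq> outside (?C1 \<union> ?A)"
      using conn_dich[OF C2o(1) J1(2) J1(5) inside_Int_outside] C2o(2)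
      by (metis inside_Un_outside)
    have c1d: "?C1 - {p,q} \<subseteq> inside (?C2 \<union> ?A) \<or> ?C1 - {p,q} \<subseteq> outside (?C2 \<union> ?A)"
      using conn_dich[OF C1o(1) J2(2) J2(5) inside_Int_outside] C1o(2)
      by (metis inside_Un_outside)
    have Bo3: "Bo \<inter> (?C1 \<union> ?C2 \<union> ?A) = {}" using Bo(1,6) by (auto simp: C_def)
    show False
    proof (cases "?C2 - {p,q} \<subseteq> inside (?C1 \<union> ?A)")
      case True
      show False
        using sub_alpha[OF arcs(1,2,3) ends i12 i1a i2a Bo(4) Bo3 BoO[unfolded C_def]
            rs(1)[THEN DiffD1] rs(3) rs(5) rcl(1) rs(2) rcl(2) True] .
    next
      case F1: False
      show False
      proof (cases "?C1 - {p,q} \<subseteq> inside (?C2 \<union> ?A)")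
        case True
        have i21: "?C2 \<inter> ?C1 = {p,q}" using i12 by blast
        have Bo3': "Bo \<inter> (?C2 \<union> ?C1 \<union> ?A) = {}" using Bo3 by blast
        have BoO': "Bo \<inter> inside (?C2 \<union> ?C1) = {}" using BoO by (simp add: C_def Un_commute)
        show False
          using sub_alpha[OF arcs(2,1,3) ends(3,4,1,2,5,6) i21 i2a i1a Bo(4) Bo3' BoO'
            rs(2)[THEN DiffD1] rs(4) rs(6) rcl(2) rs(1) rcl(1) True] .
      next
        case F2: False
        have o1: "?C2 - {p,q} \<subseteq> outside (?C1 \<union> ?A)" using c2d F1 by blast
        have o2: "?C1 - {p,q} \<subseteq> outside (?C2 \<union> ?A)" using c1d F2 by blast
        obtain a0 where a0: "a0 \<in> inside C" using JC(1) by blast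
        have IA: "inside C \<inter> ?A = {}"
        proof -
          have "?A \<subseteq> Ao \<union> {p,q}" by (auto simp: Ao_def)
          moreover have "p \<in> C" "q \<in> C" using ends pathstart_in_path_image[of c1]
              pathfinish_in_path_image[of c1] by (auto simp: C_def)
          ultimately show ?thesis using AoO IO(2) inside_no_overlap[of C] by blast
        qed
        have "inside C \<subseteq> outside (?C1 \<union> ?A)"
        proof -
          have "inside C \<inter> (?C1 \<union> ?A) = {}"
            using IA inside_no_overlap[of C] unfolding C_def by blast
          then have s1: "inside C \<subseteq> inside (?C1 \<union> ?A) \<union> outside (?C1 \<union> ?A)"
            using inside_Un_outside[of "?C1 \<union> ?A"] by blast
          have "s \<in> closure (inside C)" using JC(7) rs closure_Un_frontier[of "inside C"]
            by (auto simp: C_def)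
          moreover have "s \<in> outside (?C1 \<union> ?A)" using o1 rs(2) by blast
          ultimately have "inside C \<inter> outside (?C1 \<union> ?A) \<noteq> {}"
            by (rule closure_open_meet[OF _ J1(5)])
          moreover have "inside (?C1 \<union> ?A) \<inter> outside (?C1 \<union> ?A) = {}" by (rule inside_Int_outside)
          ultimately show ?thesis
            using conn_dich[OF JC(3) J1(2) J1(5) inside_Int_outside s1] by blast
        qed
        moreover have "inside C \<subseteq> outside (?C2 \<union> ?A)"
        proof -
          have "inside C \<inter> (?C2 \<union> ?A) = {}"
            using IA inside_no_overlap[of C] unfolding C_def by blast
          then have s1: "inside C \<subseteq> inside (?C2 \<union> ?A) \<union> outside (?C2 \<union> ?A)"
            using inside_Un_outside[of "?C2 \<union> ?A"] by blast
          have "r \<in> closure (inside C)" using JC(7) rs closure_Un_frontier[of "inside C"]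
            by (auto simp: C_def)
          moreover have "r \<in> outside (?C2 \<union> ?A)" using o2 rs(1) by blast
          ultimately have "inside C \<inter> outside (?C2 \<union> ?A) \<noteq> {}"
            by (rule closure_open_meet[OF _ J2(5)])
          moreover have "inside (?C2 \<union> ?A) \<inter> outside (?C2 \<union> ?A) = {}" by (rule inside_Int_outside)
          ultimately show ?thesis
            using conn_dich[OF JC(3) J2(2) J2(5) inside_Int_outside s1] by blast
        qed
        ultimately have a01: "a0 \<in> outside (?C1 \<union> ?A)" and a02: "a0 \<in> outside (?C2 \<union> ?A)"
          using a0 by auto
        have bnd: "bounded (C \<union> ?A)"
          using arcs by (simp add: C_def arc_imp_path bounded_path_image)
        obtain b0 where b0: "b0 \<in> outside (C \<union> ?A)"
          using outside_bounded_nonempty[OF bnd] by blast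
        have b01: "b0 \<in> outside (?C1 \<union> ?A)" and b02: "b0 \<in> outside (?C2 \<union> ?A)"
          and b0C: "b0 \<in> outside C"
          using b0 outside_mono[of "?C1 \<union> ?A" "C \<union> ?A"] outside_mono[of "?C2 \<union> ?A" "C \<union> ?A"]
            outside_mono[of C "C \<union> ?A"] by (auto simp: C_def)
        have cc1: "connected_component (- (?C1 \<union> ?A)) a0 b0"
          unfolding connected_component_def
        proof (intro exI conjI)
          show "outside (?C1 \<union> ?A) \<subseteq> - (?C1 \<union> ?A)"
            using outside_no_overlap[of "?C1 \<union> ?A"] by blast
        qed (use J1(6) a01 b01 in auto)
        have cc2: "connected_component (- (?C2 \<union> ?A)) a0 b0"
          unfolding connected_component_def
        proof (intro exI conjI)
          show "outside (?C2 \<union> ?A) \<subseteq> - (?C2 \<union> ?A)"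
            using outside_no_overlap[of "?C2 \<union> ?A"] by blast
        qed (use J2(6) a02 b02 in auto)
        have int: "(?C1 \<union> ?A) \<inter> (?C2 \<union> ?A) = ?A"
        proof -
          have "p \<in> ?A" "q \<in> ?A" using ends(5,6) pathstart_in_path_image[of a] pathfinish_in_path_image[of a] by auto
          have "(?C1 \<union> ?A) \<inter> (?C2 \<union> ?A) = (?C1 \<inter> ?C2) \<union> ?A" by blast
          then show ?thesis using i12 \<open>p \<in> ?A\<close> \<open>q \<in> ?A\<close> by (simp add: insert_absorb)
        qed
        have "connected_component (- ((?C1 \<union> ?A) \<union> (?C2 \<union> ?A))) a0 b0"
        proof (rule Janiszewski[OF _ _ _ cc1 cc2])
          show "compact (?C1 \<union> ?A)" using arcs by (simp add: arc_imp_path compact_path_image compact_Un)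
          show "closed (?C2 \<union> ?A)" using arcs by (simp add: closed_pi2)
          show "connected ((?C1 \<union> ?A) \<inter> (?C2 \<union> ?A))" unfolding int
            using arcs by (simp add: arc_imp_path connected_path_image)
        qed
        then have "connected_component (- C) a0 b0"
          by (rule connected_component_of_subset) (auto simp: C_def)
        then have "connected_component_set (- C) b0 = connected_component_set (- C) a0"
          by (metis connected_component_eq mem_Collect_eq)
        moreover have "bounded (connected_component_set (- C) a0)" using a0 by (simp add: inside_def)
        moreover have "\<not> bounded (connected_component_set (- C) b0)" using b0C by (simp add: outside_def)
        ultimately show False by simp
      qed
    qed
  qed
qed



definition oarc :: "('v \<Rightarrow> complex) \<Rightarrow> ('v set \<Rightarrow> real \<Rightarrow> complex) \<Rightarrow> 'v \<Rightarrow> 'v \<Rightarrow> real \<Rightarrow> complex" where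
  "oarc pos \<gamma> x y = (if pathstart (\<gamma> {x,y}) = pos x then \<gamma> {x,y} else reversepath (\<gamma> {x,y}))"

fun wpath :: "('v \<Rightarrow> complex) \<Rightarrow> ('v set \<Rightarrow> real \<Rightarrow> complex) \<Rightarrow> 'v list \<Rightarrow> real \<Rightarrow> complex" where
  "wpath pos \<gamma> (x # y # z # zs) = oarc pos \<gamma> x y +++ wpath pos \<gamma> (y # z # zs)"
| "wpath pos \<gamma> [x, y] = oarc pos \<gamma> x y"
| "wpath pos \<gamma> _ = linepath 0 0"

definition ledges :: "'v list \<Rightarrow> 'v set set" where
  "ledges xs = {{xs!i, xs!Suc i} | i. Suc i < length xs}"

lemma ledges_Cons2: "ledges (x # y # zs) = insert {x,y} (ledges (y # zs))"
proof
  show "ledges (x # y # zs) \<subseteq> insert {x, y} (ledges (y # zs))"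
  proof
    fix e assume "e \<in> ledges (x # y # zs)"
    then obtain i where i: "e = {(x#y#zs)!i, (x#y#zs)!Suc i}" "Suc i < length (x#y#zs)"
      by (auto simp: ledges_def)
    show "e \<in> insert {x, y} (ledges (y # zs))"
    proof (cases i)
      case 0 then show ?thesis using i by simp
    next
      case (Suc j) then show ?thesis using i by (auto simp: ledges_def)
    qed
  qed
  show "insert {x, y} (ledges (y # zs)) \<subseteq> ledges (x # y # zs)"
  proof
    fix e assume "e \<in> insert {x, y} (ledges (y # zs))"
    then consider "e = {x,y}" | j where "e = {(y#zs)!j, (y#zs)!Suc j}" "Suc j < length (y#zs)"
      by (auto simp: ledges_def)
    then show "e \<in> ledges (x # y # zs)"
    proof cases
      case 1 then show ?thesis unfolding ledges_def by (rule_tac CollectI, rule_tac x=0 in exI) simp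
    next
      case 2 then show ?thesis unfolding ledges_def
        by (intro CollectI exI[of _ "Suc j"]) simp
    qed
  qed
qed

lemma ledges_short: "length xs < 2 \<Longrightarrow> ledges xs = {}"
  by (auto simp: ledges_def)

lemma ledges_subset: "e \<in> ledges xs \<Longrightarrow> e \<subseteq> set xs"
  by (auto simp: ledges_def)

lemma ledges_rev: "ledges (rev xs) = ledges xs"
proof -
  have "{rev xs ! i, rev xs ! Suc i} \<in> ledges xs" if "Suc i < length xs" for i
  proof -
    have "rev xs ! i = xs ! Suc (length xs - 2 - i)" "rev xs ! Suc i = xs ! (length xs - 2 - i)"
      using that by (auto simp: rev_nth Suc_diff_Suc numeral_2_eq_2)
    then show ?thesis unfolding ledges_def using that
      by (intro CollectI exI[of _ "length xs - 2 - i"]) auto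
  qed
  moreover have "{xs ! i, xs ! Suc i} \<in> ledges (rev xs)" if "Suc i < length xs" for i
  proof -
    have "xs ! i = rev xs ! Suc (length xs - 2 - i)" "xs ! Suc i = rev xs ! (length xs - 2 - i)"
      using that by (auto simp: rev_nth Suc_diff_Suc numeral_2_eq_2)
    then show ?thesis unfolding ledges_def using that
      by (intro CollectI exI[of _ "length xs - 2 - i"]) auto
  qed
  ultimately show ?thesis unfolding ledges_def[of "rev xs"] unfolding ledges_def[of xs] by fastforce
qed

lemma pe_edge:
  assumes "plane_embedding V E pos \<gamma>" "e \<in> E"
  shows "arc (\<gamma> e)" "\<exists>u v. e = {u, v} \<and> pathstart (\<gamma> e) = pos u \<and> pathfinish (\<gamma> e) = pos v"
    "path_image (\<gamma> e) \<inter> pos ` V \<subseteq> pos ` e"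
  using assms by (auto simp: plane_embedding_def)

lemma pe_inter:
  assumes "plane_embedding V E pos \<gamma>" "e \<in> E" "e' \<in> E" "e \<noteq> e'"
  shows "path_image (\<gamma> e) \<inter> path_image (\<gamma> e') \<subseteq> pos ` (e \<inter> e')"
  using assms by (auto simp: plane_embedding_def)

lemma pe_endpoint:
  assumes "plane_embedding V E pos \<gamma>" "e \<in> E" "v \<in> e"
  shows "pos v \<in> path_image (\<gamma> e)"
proof -
  obtain u w where "e = {u, w}" "pathstart (\<gamma> e) = pos u" "pathfinish (\<gamma> e) = pos w"
    using pe_edge(2)[OF assms(1,2)] by blast
  then show ?thesis using assms(3) pathstart_in_path_image[of "\<gamma> e"] pathfinish_in_path_image[of "\<gamma> e"]
    by auto
qed

lemma oarc_props:
  assumes pe: "plane_embedding V E pos \<gamma>" and e: "{x,y} \<in> E" and xy: "x \<noteq> y" "x \<in> V" "y \<in> V"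
  shows "arc (oarc pos \<gamma> x y)" "pathstart (oarc pos \<gamma> x y) = pos x"
    "pathfinish (oarc pos \<gamma> x y) = pos y" "path_image (oarc pos \<gamma> x y) = path_image (\<gamma> {x,y})"
proof -
  have inj: "inj_on pos V" using pe by (simp add: plane_embedding_def)
  have pxy: "pos x \<noteq> pos y" using inj xy by (auto dest: inj_onD)
  have arc: "arc (\<gamma> {x,y})" using pe_edge(1)[OF pe e] .
  obtain u v where uv: "{x,y} = {u, v}" "pathstart (\<gamma> {x,y}) = pos u" "pathfinish (\<gamma> {x,y}) = pos v"
    using pe_edge(2)[OF pe e] by blast
  have "(u = x \<and> v = y) \<or> (u = y \<and> v = x)" using uv(1) xy(1) by (auto simp: doubleton_eq_iff)
  then have "arc (oarc pos \<gamma> x y) \<and> pathstart (oarc pos \<gamma> x y) = pos x \<and>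
    pathfinish (oarc pos \<gamma> x y) = pos y \<and> path_image (oarc pos \<gamma> x y) = path_image (\<gamma> {x,y})"
  proof
    assume "u = x \<and> v = y"
    then show ?thesis using uv arc by (simp add: oarc_def)
  next
    assume "u = y \<and> v = x"
    then show ?thesis using uv arc pxy by (simp add: oarc_def arc_reversepath)
  qed
  then show "arc (oarc pos \<gamma> x y)" "pathstart (oarc pos \<gamma> x y) = pos x"
    "pathfinish (oarc pos \<gamma> x y) = pos y" "path_image (oarc pos \<gamma> x y) = path_image (\<gamma> {x,y})"
    by auto
qed

definition img :: "('v set \<Rightarrow> real \<Rightarrow> complex) \<Rightarrow> 'v set set \<Rightarrow> complex set" where
  "img \<gamma> ES = (\<Union>e\<in>ES. path_image (\<gamma> e))"

lemma wpath_props: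
  assumes pe: "plane_embedding V E pos \<gamma>"
  shows "distinct xs \<Longrightarrow> 2 \<le> length xs \<Longrightarrow> set xs \<subseteq> V \<Longrightarrow> ledges xs \<subseteq> E \<Longrightarrow>
    arc (wpath pos \<gamma> xs) \<and> pathstart (wpath pos \<gamma> xs) = pos (hd xs) \<and>
    pathfinish (wpath pos \<gamma> xs) = pos (last xs) \<and> path_image (wpath pos \<gamma> xs) = img \<gamma> (ledges xs)"
proof (induction xs rule: induct_list012)
  case (3 x y zs)
  show ?case
  proof (cases zs)
    case Nil
    have exy: "{x,y} \<in> E" using "3.prems" Nil by (simp add: ledges_Cons2 ledges_short)
    have xy: "x \<noteq> y" "x \<in> V" "y \<in> V" using "3.prems" by auto
    note O = oarc_props[OF pe exy xy]
    show ?thesis using O Nil by (simp add: ledges_Cons2 ledges_short img_def)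
  next
    case (Cons z zs')
    have pr: "distinct (y#zs)" "2 \<le> length (y#zs)" "set (y#zs) \<subseteq> V" "ledges (y#zs) \<subseteq> E"
      using "3.prems" Cons by (auto simp: ledges_Cons2)
    have IH: "arc (wpath pos \<gamma> (y # z # zs')) \<and> pathstart (wpath pos \<gamma> (y # z # zs')) = pos y \<and>
      pathfinish (wpath pos \<gamma> (y # z # zs')) = pos (last (y # z # zs')) \<and>
      path_image (wpath pos \<gamma> (y # z # zs')) = img \<gamma> (ledges (y # z # zs'))"
      using "3.IH"(2)[OF pr] Cons by simp
    have exy: "{x,y} \<in> E" using "3.prems" by (simp add: ledges_Cons2)
    have xy: "x \<noteq> y" "x \<in> V" "y \<in> V" using "3.prems" by auto
    note O = oarc_props[OF pe exy xy]
    have inter: "path_image (oarc pos \<gamma> x y) \<inter> path_image (wpath pos \<gamma> (y # z # zs')) \<subseteq> {pos y}"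
    proof
      fix w assume w: "w \<in> path_image (oarc pos \<gamma> x y) \<inter> path_image (wpath pos \<gamma> (y # z # zs'))"
      then obtain e where e: "e \<in> ledges (y # z # zs')" "w \<in> path_image (\<gamma> e)"
        using IH by (auto simp: img_def)
      have eE: "e \<in> E" using e(1) pr(4) Cons by auto
      have xe: "x \<notin> e" using ledges_subset[OF e(1)] "3.prems"(1) Cons by auto
      then have ne: "{x,y} \<noteq> e" by auto
      have "w \<in> path_image (\<gamma> {x,y}) \<inter> path_image (\<gamma> e)" using w e(2) by (auto simp: O(4))
      then have "w \<in> pos ` ({x,y} \<inter> e)" using pe_inter[OF pe exy eE ne] by blast
      then show "w \<in> {pos y}" using xe by auto
    qed
    have "arc (oarc pos \<gamma> x y +++ wpath pos \<gamma> (y # z # zs'))"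
      using IH O inter by (intro arc_join) auto
    moreover have "path_image (oarc pos \<gamma> x y +++ wpath pos \<gamma> (y # z # zs')) = img \<gamma> (ledges (x # y # z # zs'))"
      using IH O by (simp add: path_image_join ledges_Cons2 img_def)
    ultimately show ?thesis using IH O Cons by (simp add: pathstart_join pathfinish_join)
  qed
qed auto

lemma img_inter:
  assumes pe: "plane_embedding V E pos \<gamma>" and "ES \<subseteq> E" "ES' \<subseteq> E" "ES \<inter> ES' = {}"
  shows "img \<gamma> ES \<inter> img \<gamma> ES' \<subseteq> pos ` (\<Union>ES \<inter> \<Union>ES')"
proof
  fix w assume "w \<in> img \<gamma> ES \<inter> img \<gamma> ES'"
  then obtain e e' where e: "e \<in> ES" "e' \<in> ES'" "w \<in> path_image (\<gamma> e)" "w \<in> path_image (\<gamma> e')"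
    by (auto simp: img_def)
  have "e \<noteq> e'" using e assms(4) by auto
  then have "w \<in> pos ` (e \<inter> e')" using pe_inter[OF pe, of e e'] e assms(2,3) by blast
  then show "w \<in> pos ` (\<Union>ES \<inter> \<Union>ES')" using e by blast
qed

lemma img_vertex:
  assumes pe: "plane_embedding V E pos \<gamma>" and "ledges xs \<subseteq> E" "v \<in> set xs" "2 \<le> length xs"
  shows "pos v \<in> img \<gamma> (ledges xs)"
proof -
  obtain i where i: "i < length xs" "xs ! i = v" using assms(3) by (auto simp: in_set_conv_nth)
  show ?thesis
  proof (cases "Suc i < length xs")
    case True
    then have "{xs!i, xs!Suc i} \<in> ledges xs" by (auto simp: ledges_def)
    then show ?thesis using pe_endpoint[OF pe, of "{xs!i, xs!Suc i}" v] assms(2) i by (auto simp: img_def)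
  next
    case False
    then have "i = Suc (i - 1)" "Suc (i - 1) < length xs" using i assms(4) by auto
    then have "{xs!(i-1), xs!i} \<in> ledges xs" unfolding ledges_def
      by (intro CollectI exI[of _ "i - 1"]) simp
    then show ?thesis using pe_endpoint[OF pe, of "{xs!(i-1), xs!i}" v] assms(2) i by (auto simp: img_def)
  qed
qed

lemma img_sub_drawing: "ES \<subseteq> E \<Longrightarrow> img \<gamma> ES \<subseteq> drawing V E pos \<gamma>"
  by (auto simp: img_def drawing_def)

lemma ledges_nonempty_mem: "e \<in> ledges xs \<Longrightarrow> e \<noteq> {}"
  by (auto simp: ledges_def)

lemma closed_drawing:
  assumes "simple_graph V E" "plane_embedding V E pos \<gamma>"
  shows "closed (drawing V E pos \<gamma>)"
proof -
  have fV: "finite V" using assms(1) by (simp add: simple_graph_def)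
  have "E \<subseteq> Pow V" using assms(1) by (auto simp: simple_graph_def)
  then have fE: "finite E" using fV by (meson finite_Pow_iff finite_subset)
  have "closed (\<Union>e\<in>E. path_image (\<gamma> e))"
    using fE pe_edge(1)[OF assms(2)] by (intro closed_UN) (auto intro: closed_path_image arc_imp_path)
  moreover have "closed (pos ` V)" using fV by (simp add: finite_imp_closed)
  ultimately show ?thesis by (simp add: drawing_def closed_Un)
qed

lemma ledges_set: "\<Union>(ledges xs) \<subseteq> set xs"
  using ledges_subset by blast

lemma GT:
  assumes sg: "simple_graph V E" and pe: "plane_embedding V E pos \<gamma>"
    and F: "F \<in> components (- drawing V E pos \<gamma>)"
    and fr: "frontier F = img \<gamma> (ledges L1) \<union> img \<gamma> (ledges L2)"
    and L1: "distinct L1" "2 \<le> length L1" "set L1 \<subseteq> V" "ledges L1 \<subseteq> E" "hd L1 = x" "last L1 = y"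
    and L2: "distinct L2" "2 \<le> length L2" "set L2 \<subseteq> V" "ledges L2 \<subseteq> E" "hd L2 = y" "last L2 = x"
    and L12: "set L1 \<inter> set L2 = {x,y}" "ledges L1 \<inter> ledges L2 = {}"
    and P: "distinct P" "2 \<le> length P" "set P \<subseteq> V" "ledges P \<subseteq> E" "hd P = x" "last P = y"
      "ledges P \<inter> (ledges L1 \<union> ledges L2) = {}" "set P \<inter> (set L1 \<union> set L2) \<subseteq> {x,y}"
    and Q: "distinct Q" "2 \<le> length Q" "set Q \<subseteq> V" "ledges Q \<subseteq> E"
      "hd Q \<in> set L1 - {x,y}" "last Q \<in> set L2 - {x,y}"
      "ledges Q \<inter> (ledges L1 \<union> ledges L2) = {}" "set Q \<inter> (set L1 \<union> set L2) \<subseteq> {hd Q, last Q}"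
    and PQ: "set P \<inter> set Q = {}"
  shows False
proof -
  have inj: "inj_on pos V" using pe by (simp add: plane_embedding_def)
  note W1 = wpath_props[OF pe L1(1-4)] and W2 = wpath_props[OF pe L2(1-4)]
    and WP = wpath_props[OF pe P(1-4)] and WQ = wpath_props[OF pe Q(1-4)]
  define c1 where "c1 = wpath pos \<gamma> L1"
  define c2 where "c2 = reversepath (wpath pos \<gamma> L2)"
  define a where "a = wpath pos \<gamma> P"
  define b where "b = wpath pos \<gamma> Q"
  have arcs: "arc c1" "arc c2" "arc a" "arc b"
    using W1 W2 WP WQ by (auto simp: c1_def c2_def a_def b_def arc_reversepath)
  have ends: "pathstart c1 = pos x" "pathfinish c1 = pos y" "pathstart c2 = pos x" "pathfinish c2 = pos y"
      "pathstart a = pos x" "pathfinish a = pos y"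
    using W1 W2 WP L1 L2 P by (auto simp: c1_def c2_def a_def)
  have bends: "pathstart b = pos (hd Q)" "pathfinish b = pos (last Q)" using WQ by (auto simp: b_def)
  have pims: "path_image c1 = img \<gamma> (ledges L1)" "path_image c2 = img \<gamma> (ledges L2)"
    "path_image a = img \<gamma> (ledges P)" "path_image b = img \<gamma> (ledges Q)"
    using W1 W2 WP WQ by (auto simp: c1_def c2_def a_def b_def)
  have hQ: "hd Q \<in> V" "last Q \<in> V"
  proof -
    have "Q \<noteq> []" using Q(2) by auto
    then show "hd Q \<in> V" "last Q \<in> V" using Q(3) hd_in_set last_in_set by blast+
  qed
  have ex: "\<And>xs v. ledges xs \<subseteq> E \<Longrightarrow> v \<in> set xs \<Longrightarrow> 2 \<le> length xs \<Longrightarrow> pos v \<in> img \<gamma> (ledges xs)"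
    using img_vertex[OF pe] by blast
  have x1: "x \<in> set L1" "y \<in> set L1" "x \<in> set L2" "y \<in> set L2" "x \<in> set P" "y \<in> set P"
  proof -
    have ne: "L1 \<noteq> []" "L2 \<noteq> []" "P \<noteq> []" using L1(2) L2(2) P(2) by auto
    show "x \<in> set L1" "y \<in> set L1" "x \<in> set L2" "y \<in> set L2" "x \<in> set P" "y \<in> set P"
      using hd_in_set[OF ne(1)] last_in_set[OF ne(1)] hd_in_set[OF ne(2)] last_in_set[OF ne(2)]
        hd_in_set[OF ne(3)] last_in_set[OF ne(3)] L1(5,6) L2(5,6) P(5,6) by auto
  qed
  have xyV: "x \<in> V" "y \<in> V" using x1 L1(3) by auto
  have i12: "path_image c1 \<inter> path_image c2 = {pos x, pos y}"
  proof
    have "img \<gamma> (ledges L1) \<inter> img \<gamma> (ledges L2) \<subseteq> pos ` (\<Union>(ledges L1) \<inter> \<Union>(ledges L2))"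
      by (rule img_inter[OF pe L1(4) L2(4) L12(2)])
    also have "\<dots> \<subseteq> pos ` (set L1 \<inter> set L2)" using ledges_set[of L1] ledges_set[of L2] by blast
    finally show "path_image c1 \<inter> path_image c2 \<subseteq> {pos x, pos y}" using L12(1) pims by simp
    show "{pos x, pos y} \<subseteq> path_image c1 \<inter> path_image c2"
      using ex[OF L1(4) _ L1(2)] ex[OF L2(4) _ L2(2)] x1 pims by auto
  qed
  have dP1: "ledges P \<inter> ledges L1 = {}" "ledges P \<inter> ledges L2 = {}" using P(7) by auto
  have i1a: "path_image c1 \<inter> path_image a = {pos x, pos y}"
  proof
    have "img \<gamma> (ledges L1) \<inter> img \<gamma> (ledges P) \<subseteq> pos ` (\<Union>(ledges L1) \<inter> \<Union>(ledges P))"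
      by (rule img_inter[OF pe L1(4) P(4)]) (use dP1 in auto)
    also have "\<dots> \<subseteq> pos ` {x,y}" using ledges_set[of L1] ledges_set[of P] P(8) by blast
    finally show "path_image c1 \<inter> path_image a \<subseteq> {pos x, pos y}" using pims by simp
    show "{pos x, pos y} \<subseteq> path_image c1 \<inter> path_image a"
      using ex[OF L1(4) _ L1(2)] ex[OF P(4) _ P(2)] x1 pims by auto
  qed
  have i2a: "path_image c2 \<inter> path_image a = {pos x, pos y}"
  proof
    have "img \<gamma> (ledges L2) \<inter> img \<gamma> (ledges P) \<subseteq> pos ` (\<Union>(ledges L2) \<inter> \<Union>(ledges P))"
      by (rule img_inter[OF pe L2(4) P(4)]) (use dP1 in auto)
    also have "\<dots> \<subseteq> pos ` {x,y}" using ledges_set[of L2] ledges_set[of P] P(8) by blast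
    finally show "path_image c2 \<inter> path_image a \<subseteq> {pos x, pos y}" using pims by simp
    show "{pos x, pos y} \<subseteq> path_image c2 \<inter> path_image a"
      using ex[OF L2(4) _ L2(2)] ex[OF P(4) _ P(2)] x1 pims by auto
  qed
  have hqne: "pos (hd Q) \<noteq> pos x" "pos (hd Q) \<noteq> pos y" "pos (last Q) \<noteq> pos x" "pos (last Q) \<noteq> pos y"
    using Q(5,6) inj xyV hQ by (auto dest: inj_onD)
  have bs: "pathstart b \<in> path_image c1 - {pos x, pos y}"
    using ex[OF L1(4) _ L1(2), of "hd Q"] Q(5) bends hqne pims by auto
  have bf: "pathfinish b \<in> path_image c2 - {pos x, pos y}"
    using ex[OF L2(4) _ L2(2), of "last Q"] Q(6) bends hqne pims by auto
  have ibc: "path_image b \<inter> (path_image c1 \<union> path_image c2) \<subseteq> {pathstart b, pathfinish b}"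
  proof -
    have "img \<gamma> (ledges Q) \<inter> img \<gamma> (ledges L1 \<union> ledges L2) \<subseteq> pos ` (\<Union>(ledges Q) \<inter> \<Union>(ledges L1 \<union> ledges L2))"
      by (rule img_inter[OF pe Q(4)]) (use L1(4) L2(4) Q(7) in auto)
    also have "\<dots> \<subseteq> pos ` {hd Q, last Q}"
      using ledges_set[of Q] ledges_set[of L1] ledges_set[of L2] Q(8) by blast
    finally show ?thesis using pims bends by (simp add: img_def)
  qed
  have dPQ: "ledges Q \<inter> ledges P = {}"
  proof (rule ccontr)
    assume "ledges Q \<inter> ledges P \<noteq> {}"
    then obtain e where "e \<in> ledges Q" "e \<in> ledges P" by blast
    then have "e \<subseteq> set P \<inter> set Q" "e \<noteq> {}" using ledges_subset ledges_nonempty_mem by blast+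
    then show False using PQ by blast
  qed
  have iba: "path_image b \<inter> path_image a = {}"
  proof -
    have "img \<gamma> (ledges Q) \<inter> img \<gamma> (ledges P) \<subseteq> pos ` (\<Union>(ledges Q) \<inter> \<Union>(ledges P))"
      by (rule img_inter[OF pe Q(4) P(4) dPQ])
    also have "\<dots> = {}" using ledges_set[of Q] ledges_set[of P] PQ by blast
    finally show ?thesis using pims by simp
  qed
  have Fopen: "open F"
    using open_components[OF _ F] closed_drawing[OF sg pe] by (simp add: open_Compl)
  have Fconn: "connected F" using in_components_connected[OF F] .
  have Fne: "F \<noteq> {}" using in_components_nonempty[OF F] .
  have Fsub: "F \<subseteq> - drawing V E pos \<gamma>" using in_components_subset[OF F] .
  have Fdis: "F \<inter> (path_image c1 \<union> path_image c2 \<union> path_image a \<union> path_image b) = {}"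
    using Fsub img_sub_drawing[OF L1(4), of \<gamma> V pos] img_sub_drawing[OF L2(4), of \<gamma> V pos]
      img_sub_drawing[OF P(4), of \<gamma> V pos] img_sub_drawing[OF Q(4), of \<gamma> V pos] pims by blast
  have Ffr: "frontier F = path_image c1 \<union> path_image c2" using fr pims by simp
  show False
    by (rule core[OF arcs ends i12 i1a i2a bs bf ibc iba Fopen Fconn Fne Fdis Ffr])
qed



definition seg :: "'v list \<Rightarrow> nat \<Rightarrow> nat \<Rightarrow> 'v list" where
  "seg cs k m = map (\<lambda>i. cs ! (i mod length cs)) [k..<Suc m]"

definition cedge :: "'v list \<Rightarrow> nat \<Rightarrow> 'v set" where
  "cedge cs j = {cs ! j, cs ! (Suc j mod length cs)}"

lemma cycle_edges_cedge: "cycle_edges cs = {cedge cs i | i. i < length cs}"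
  by (simp add: cycle_edges_def cedge_def)

lemma seg_length [simp]: "length (seg cs k m) = Suc m - k"
  unfolding seg_def by (simp only: length_map length_upt)

lemma seg_nth: "t < Suc m - k \<Longrightarrow> seg cs k m ! t = cs ! ((k + t) mod length cs)"
  unfolding seg_def by (simp del: upt_Suc)

lemma seg_set: "set (seg cs k m) = (\<lambda>i. cs ! (i mod length cs)) ` {k..m}"
  unfolding seg_def by (simp del: upt_Suc add: atLeastLessThanSuc_atLeastAtMost)

lemma seg_hd: "k \<le> m \<Longrightarrow> hd (seg cs k m) = cs ! (k mod length cs)"
proof -
  assume "k \<le> m"
  then have "seg cs k m \<noteq> []" by (auto simp flip: length_greater_0_conv)
  then show ?thesis using seg_nth[of 0 m k cs] \<open>k \<le> m\<close> by (simp add: hd_conv_nth)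
qed

lemma seg_last: "k \<le> m \<Longrightarrow> last (seg cs k m) = cs ! (m mod length cs)"
proof -
  assume "k \<le> m"
  then have "seg cs k m \<noteq> []" "Suc m - k - 1 < Suc m - k" "k + (Suc m - k - 1) = m"
    by (auto simp flip: length_greater_0_conv)
  then show ?thesis using seg_nth[of "Suc m - k - 1" m k cs] by (simp add: last_conv_nth)
qed

lemma mod_inj_interval:
  fixes i i' n :: nat
  assumes "i mod n = i' mod n" "k \<le> i" "i \<le> m" "k \<le> i'" "i' \<le> m" "m - k < n"
  shows "i = i'"
proof (rule ccontr)
  assume ne: "i \<noteq> i'"
  show False
  proof (cases "i < i'")
    case True
    then have "n dvd i' - i" using assms(1) mod_eq_dvd_iff_nat[of i i' n] by simp
    moreover have "0 < i' - i" "i' - i < n" using True assms by auto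
    ultimately show False by (meson dvd_imp_le leD)
  next
    case False
    then have "i' < i" using ne by auto
    then have "n dvd i - i'" using assms(1) mod_eq_dvd_iff_nat[of i' i n] by simp
    moreover have "0 < i - i'" "i - i' < n" using \<open>i' < i\<close> assms by auto
    ultimately show False by (meson dvd_imp_le leD)
  qed
qed

lemma seg_distinct:
  assumes "distinct cs" "m - k < length cs"
  shows "distinct (seg cs k m)"
proof -
  have "inj_on (\<lambda>i. cs ! (i mod length cs)) {k..m}"
  proof (rule inj_onI)
    fix i i' assume "i \<in> {k..m}" "i' \<in> {k..m}" "cs ! (i mod length cs) = cs ! (i' mod length cs)"
    moreover have "length cs > 0" using assms(2) by auto
    ultimately show "i = i'"
      using assms mod_inj_interval[of i "length cs" i' k m] nth_eq_iff_index_eq[OF assms(1)] by auto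
  qed
  then show ?thesis unfolding seg_def by (simp add: distinct_map atLeastLessThanSuc_atLeastAtMost del: upt_Suc)
qed

lemma seg_ledges: "ledges (seg cs k m) = {cedge cs (i mod length cs) | i. k \<le> i \<and> i < m}"
proof -
  have "{seg cs k m ! t, seg cs k m ! Suc t} = cedge cs ((k + t) mod length cs)" if "Suc t < Suc m - k" for t
    using that by (simp add: seg_nth cedge_def mod_Suc_eq)
  then show ?thesis unfolding ledges_def
    apply auto
     apply (rule_tac x="k + i" in exI, force)
    apply (rule_tac x="i - k" in exI, auto)
    done
qed

lemma cedge_inj:
  assumes "distinct cs" "3 \<le> length cs" "i < length cs" "j < length cs" "cedge cs i = cedge cs j"
  shows "i = j"
proof (rule ccontr)
  assume ne: "i \<noteq> j"
  let ?n = "length cs"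
  have si: "Suc i mod ?n < ?n" "Suc j mod ?n < ?n" using assms(2) by (auto intro!: mod_less_divisor)
  have "cs ! i \<noteq> cs ! j" using ne assms nth_eq_iff_index_eq by blast
  then have "cs ! i = cs ! (Suc j mod ?n) \<and> cs ! (Suc i mod ?n) = cs ! j"
    using assms(5) unfolding cedge_def by (auto simp: doubleton_eq_iff)
  then have e: "i = Suc j mod ?n" "Suc i mod ?n = j"
    using nth_eq_iff_index_eq[OF assms(1)] assms(3,4) si by auto
  have "Suc (Suc i) mod ?n = Suc (Suc i mod ?n) mod ?n" by (simp add: mod_Suc_eq)
  also have "\<dots> = Suc j mod ?n" using e(2) by simp
  also have "\<dots> = i" using e(1) by simp
  finally have "i = Suc (Suc i) mod ?n" by simp
  moreover have "Suc (Suc i) mod ?n \<noteq> i"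
  proof (cases "Suc (Suc i) < ?n")
    case True then show ?thesis by simp
  next
    case False
    then have "Suc (Suc i) = ?n \<or> Suc (Suc i) = Suc ?n" using assms(3) by auto
    then show ?thesis
    proof
      assume h: "Suc (Suc i) = ?n"
      then have "Suc (Suc i) mod ?n = 0" by simp
      then show ?thesis using h assms(2) by auto
    next
      assume h: "Suc (Suc i) = Suc ?n"
      then have "Suc (Suc i) mod ?n = 1" using assms(2) by (simp add: mod_Suc)
      then show ?thesis using h assms(2) by auto
    qed
  qed
  ultimately show False by simp
qed

lemma split_cycle:
  assumes dist: "distinct cs" and n3: "3 \<le> length cs" and lh: "lo < hi" "hi < length cs"
  defines "L1 \<equiv> seg cs lo hi" and "L2 \<equiv> seg cs hi (length cs + lo)"
  shows "distinct L1" "2 \<le> length L1" "hd L1 = cs ! lo" "last L1 = cs ! hi"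
    "distinct L2" "2 \<le> length L2" "hd L2 = cs ! hi" "last L2 = cs ! lo"
    "set L1 = {cs ! i | i. lo \<le> i \<and> i \<le> hi}"
    "set L2 = {cs ! i | i. i < length cs \<and> (i \<le> lo \<or> hi \<le> i)}"
    "ledges L1 = {cedge cs i | i. lo \<le> i \<and> i < hi}"
    "ledges L2 = {cedge cs i | i. i < length cs \<and> (i < lo \<or> hi \<le> i)}"
    "set L1 \<inter> set L2 = {cs ! lo, cs ! hi}" "set L1 \<union> set L2 = set cs"
    "ledges L1 \<inter> ledges L2 = {}" "ledges L1 \<union> ledges L2 = cycle_edges cs"
proof -
  let ?n = "length cs"
  show "distinct L1" unfolding L1_def by (rule seg_distinct[OF dist]) (use lh in auto)
  show "2 \<le> length L1" using lh by (simp add: L1_def)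
  show "hd L1 = cs ! lo" using lh by (simp add: L1_def seg_hd)
  show "last L1 = cs ! hi" using lh by (simp add: L1_def seg_last)
  show "distinct L2" unfolding L2_def by (rule seg_distinct[OF dist]) (use lh in auto)
  show "2 \<le> length L2" using lh by (simp add: L2_def)
  show "hd L2 = cs ! hi" using lh by (simp add: L2_def seg_hd)
  show "last L2 = cs ! lo" using lh by (simp add: L2_def seg_last)
  show s1: "set L1 = {cs ! i | i. lo \<le> i \<and> i \<le> hi}"
  proof -
    have "(\<lambda>i. cs ! (i mod ?n)) ` {lo..hi} = (\<lambda>i. cs ! i) ` {lo..hi}"
      using lh by (intro image_cong) auto
    then show ?thesis unfolding L1_def seg_set by auto
  qed
  show s2: "set L2 = {cs ! i | i. i < ?n \<and> (i \<le> lo \<or> hi \<le> i)}"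
  proof -
    have "(\<lambda>i. cs ! (i mod ?n)) ` {hi..?n + lo} = {cs ! i | i. i < ?n \<and> (i \<le> lo \<or> hi \<le> i)}"
    proof (intro set_eqI iffI)
      fix v assume "v \<in> (\<lambda>i. cs ! (i mod ?n)) ` {hi..?n + lo}"
      then obtain i where i: "hi \<le> i" "i \<le> ?n + lo" "v = cs ! (i mod ?n)" by auto
      show "v \<in> {cs ! i | i. i < ?n \<and> (i \<le> lo \<or> hi \<le> i)}"
      proof (cases "i < ?n")
        case True then show ?thesis using i by auto
      next
        case False
        moreover have "i - ?n < ?n" using i lh by auto
        ultimately have "i mod ?n = i - ?n" by (simp add: le_mod_geq)
        then show ?thesis using i False lh by (intro CollectI exI[of _ "i - ?n"]) auto
      qed
    next
      fix v assume "v \<in> {cs ! i | i. i < ?n \<and> (i \<le> lo \<or> hi \<le> i)}"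
      then obtain i where i: "i < ?n" "i \<le> lo \<or> hi \<le> i" "v = cs ! i" by auto
      show "v \<in> (\<lambda>i. cs ! (i mod ?n)) ` {hi..?n + lo}"
      proof (cases "hi \<le> i")
        case True then show ?thesis using i by (intro image_eqI[of _ _ i]) auto
      next
        case False
        then have "(?n + i) mod ?n = i" using i by simp
        then show ?thesis using i False lh by (intro image_eqI[of _ _ "?n + i"]) auto
      qed
    qed
    then show ?thesis unfolding L2_def seg_set by simp
  qed
  show l1: "ledges L1 = {cedge cs i | i. lo \<le> i \<and> i < hi}"
    unfolding L1_def seg_ledges using lh by (metis (no_types, lifting) less_trans mod_less order.strict_trans2)
  show l2: "ledges L2 = {cedge cs i | i. i < ?n \<and> (i < lo \<or> hi \<le> i)}"
  proof -
    have "{cedge cs (i mod ?n) | i. hi \<le> i \<and> i < ?n + lo} = {cedge cs i | i. i < ?n \<and> (i < lo \<or> hi \<le> i)}"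
    proof (intro set_eqI iffI)
      fix e assume "e \<in> {cedge cs (i mod ?n) | i. hi \<le> i \<and> i < ?n + lo}"
      then obtain i where i: "hi \<le> i" "i < ?n + lo" "e = cedge cs (i mod ?n)" by auto
      show "e \<in> {cedge cs i | i. i < ?n \<and> (i < lo \<or> hi \<le> i)}"
      proof (cases "i < ?n")
        case True then show ?thesis using i by auto
      next
        case False
        moreover have "i - ?n < ?n" using i lh by auto
        ultimately have "i mod ?n = i - ?n" by (simp add: le_mod_geq)
        then show ?thesis using i False lh by (intro CollectI exI[of _ "i - ?n"]) auto
      qed
    next
      fix e assume "e \<in> {cedge cs i | i. i < ?n \<and> (i < lo \<or> hi \<le> i)}"
      then obtain i where i: "i < ?n" "i < lo \<or> hi \<le> i" "e = cedge cs i" by auto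
      show "e \<in> {cedge cs (i mod ?n) | i. hi \<le> i \<and> i < ?n + lo}"
      proof (cases "hi \<le> i")
        case True then show ?thesis using i lh by (intro CollectI exI[of _ i]) auto
      next
        case False
        then have "(?n + i) mod ?n = i" using i by simp
        then show ?thesis using i False lh by (intro CollectI exI[of _ "?n + i"]) auto
      qed
    qed
    then show ?thesis unfolding L2_def seg_ledges by simp
  qed
  have nthinj: "\<And>i j. i < ?n \<Longrightarrow> j < ?n \<Longrightarrow> cs ! i = cs ! j \<longleftrightarrow> i = j"
    using nth_eq_iff_index_eq[OF dist] by blast
  show "set L1 \<inter> set L2 = {cs ! lo, cs ! hi}"
  proof (intro set_eqI iffI)
    fix v assume "v \<in> set L1 \<inter> set L2"
    then obtain i j where "lo \<le> i" "i \<le> hi" "v = cs ! i" "j < ?n" "j \<le> lo \<or> hi \<le> j" "v = cs ! j"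
      unfolding s1 s2 by auto
    moreover then have "i = j" using nthinj[of i j] lh by auto
    ultimately show "v \<in> {cs ! lo, cs ! hi}" by auto
  next
    fix v assume "v \<in> {cs ! lo, cs ! hi}"
    then show "v \<in> set L1 \<inter> set L2" unfolding s1 s2 using lh by auto
  qed
  show "set L1 \<union> set L2 = set cs"
  proof (intro set_eqI iffI)
    fix v assume "v \<in> set L1 \<union> set L2"
    then show "v \<in> set cs" unfolding s1 s2 using lh by auto
  next
    fix v assume "v \<in> set cs"
    then obtain i where "i < ?n" "v = cs ! i" by (auto simp: in_set_conv_nth)
    then show "v \<in> set L1 \<union> set L2" unfolding s1 s2 by (cases "lo \<le> i \<and> i \<le> hi") auto
  qed
  show "ledges L1 \<inter> ledges L2 = {}"
  proof (rule ccontr)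
    assume "ledges L1 \<inter> ledges L2 \<noteq> {}"
    then obtain i j where "lo \<le> i" "i < hi" "j < ?n" "j < lo \<or> hi \<le> j" "cedge cs i = cedge cs j"
      unfolding l1 l2 by blast
    moreover then have "i = j" using cedge_inj[OF dist n3, of i j] lh by auto
    ultimately show False by auto
  qed
  show "ledges L1 \<union> ledges L2 = cycle_edges cs"
  proof (intro set_eqI iffI)
    fix e assume "e \<in> ledges L1 \<union> ledges L2"
    then show "e \<in> cycle_edges cs" unfolding l1 l2 cycle_edges_cedge using lh by auto
  next
    fix e assume "e \<in> cycle_edges cs"
    then obtain i where "i < ?n" "e = cedge cs i" unfolding cycle_edges_cedge by auto
    then show "e \<in> ledges L1 \<union> ledges L2" unfolding l1 l2 by (cases "lo \<le> i \<and> i < hi") auto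
  qed
qed



lemma is_walk_iff: "is_walk V E xs \<longleftrightarrow> xs \<noteq> [] \<and> set xs \<subseteq> V \<and> ledges xs \<subseteq> E"
  by (auto simp: is_walk_def ledges_def)

lemma ledges_take: "ledges (take k xs) \<subseteq> ledges xs"
proof
  fix e assume "e \<in> ledges (take k xs)"
  then obtain i where i: "e = {take k xs ! i, take k xs ! Suc i}" "Suc i < length (take k xs)"
    by (auto simp: ledges_def)
  then have "e = {xs ! i, xs ! Suc i}" "Suc i < length xs" by auto
  then show "e \<in> ledges xs" unfolding ledges_def by blast
qed

lemma ledges_drop: "ledges (drop k xs) \<subseteq> ledges xs"
proof
  fix e assume "e \<in> ledges (drop k xs)"
  then obtain i where i: "e = {drop k xs ! i, drop k xs ! Suc i}" "Suc i < length (drop k xs)"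
    by (auto simp: ledges_def)
  then have "e = {xs ! (k + i), xs ! Suc (k + i)}" "Suc (k + i) < length xs" by auto
  then show "e \<in> ledges xs" unfolding ledges_def by blast
qed

lemma ledges_append: "ledges (xs @ y # ys) = ledges (xs @ [y]) \<union> ledges (y # ys)"
proof (induction xs)
  case Nil then show ?case by (simp add: ledges_short)
next
  case (Cons a xs)
  show ?case
  proof (cases xs)
    case Nil then show ?thesis by (simp add: ledges_Cons2 ledges_short)
  next
    case (Cons b xs')
    have "ledges ((a # xs) @ y # ys) = insert {a,b} (ledges (xs @ y # ys))"
      using Cons by (simp add: ledges_Cons2)
    also have "\<dots> = insert {a,b} (ledges (xs @ [y]) \<union> ledges (y # ys))" using Cons.IH by simp
    also have "\<dots> = ledges ((a # xs) @ [y]) \<union> ledges (y # ys)"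
      using Cons by (simp add: ledges_Cons2)
    finally show ?thesis .
  qed
qed

lemma dist_le:
  assumes "is_walk V E xs" "hd xs = u" "last xs = v"
  shows "graph_dist V E u v \<le> enat (length xs - 1)"
  unfolding graph_dist_def by (rule Inf_lower) (use assms in blast)

lemma dist_attain:
  assumes "graph_dist V E u v \<noteq> \<infinity>"
  shows "\<exists>xs. is_walk V E xs \<and> hd xs = u \<and> last xs = v \<and> graph_dist V E u v = enat (length xs - 1)"
proof -
  let ?A = "{enat (length xs - 1) | xs. is_walk V E xs \<and> hd xs = u \<and> last xs = v}"
  have ne: "?A \<noteq> {}" using assms unfolding graph_dist_def Inf_enat_def by (auto split: if_splits)
  then have "Inf ?A \<in> ?A" unfolding Inf_enat_def by (auto intro: LeastI)
  then show ?thesis unfolding graph_dist_def by auto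
qed

lemma min_walk_distinct:
  assumes w: "is_walk V E xs" and d: "graph_dist V E (hd xs) (last xs) = enat (length xs - 1)"
  shows "distinct xs"
proof (rule ccontr)
  assume "\<not> distinct xs"
  then obtain i j where ij: "i < j" "j < length xs" "xs ! i = xs ! j"
    by (metis distinct_conv_nth linorder_neqE_nat)
  define ys where "ys = take i xs @ xs ! j # drop (Suc j) xs"
  have "ledges ys = ledges (take i xs @ [xs ! j]) \<union> ledges (xs ! j # drop (Suc j) xs)"
    unfolding ys_def by (rule ledges_append)
  also have "take i xs @ [xs ! j] = take (Suc i) xs" using ij by (simp add: take_Suc_conv_app_nth)
  also have "xs ! j # drop (Suc j) xs = drop j xs" using ij by (simp add: Cons_nth_drop_Suc)
  finally have "ledges ys \<subseteq> ledges xs" using ledges_take ledges_drop by blast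
  moreover have "set ys \<subseteq> set xs" unfolding ys_def using ij
    by (auto dest: in_set_takeD in_set_dropD)
  ultimately have wy: "is_walk V E ys" using w by (auto simp: is_walk_iff ys_def)
  have "hd ys = hd xs"
  proof (cases i)
    case 0
    have "xs \<noteq> []" using ij by auto
    then have "hd xs = xs ! 0" by (simp add: hd_conv_nth)
    then show ?thesis using ij 0 by (simp add: ys_def)
  next
    case (Suc i')
    have "xs \<noteq> []" using ij by auto
    then have "hd xs = xs ! 0" by (simp add: hd_conv_nth)
    then show ?thesis using ij Suc by (cases xs) (simp_all add: ys_def)
  qed
  moreover have "last ys = last xs"
  proof -
    have "last ys = last (xs ! j # drop (Suc j) xs)" by (simp add: ys_def)
    also have "xs ! j # drop (Suc j) xs = drop j xs" using ij by (simp add: Cons_nth_drop_Suc)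
    also have "last (drop j xs) = last xs" using ij by (simp add: last_drop)
    finally show ?thesis .
  qed
  moreover have "length ys < length xs" using ij by (simp add: ys_def)
  ultimately have "graph_dist V E (hd xs) (last xs) \<le> enat (length ys - 1)"
    using dist_le[OF wy] by simp
  moreover have "length ys - 1 < length xs - 1" using \<open>length ys < length xs\<close> ij by (simp add: ys_def)
  ultimately show False using d by simp
qed

lemma extract_idx:
  assumes "xs \<noteq> []" "S (hd xs)" "\<not> T (hd xs)" "S (last xs)" "T (last xs)"
  shows "\<exists>j k. j < k \<and> k < length xs \<and> S (xs!j) \<and> \<not> T (xs!j) \<and> S (xs!k) \<and> T (xs!k) \<and>
           (\<forall>m. j < m \<and> m < k \<longrightarrow> \<not> S (xs!m))"
proof -
  let ?K = "\<lambda>m. m < length xs \<and> S (xs!m) \<and> T (xs!m)"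
  have l: "?K (length xs - 1)" using assms by (simp add: last_conv_nth)
  define k where "k = (LEAST m. ?K m)"
  have Kk: "?K k" unfolding k_def by (rule LeastI[where P="?K", OF l])
  have h0: "S (xs!0)" "\<not> T (xs!0)" using assms by (simp_all add: hd_conv_nth)
  have k0: "0 < k" using Kk h0 by (cases k) auto
  define M where "M = {m. m < k \<and> S (xs!m)}"
  have fM: "finite M" "0 \<in> M" using k0 h0 by (auto simp: M_def)
  define j where "j = Max M"
  have jM: "j \<in> M" using fM unfolding j_def by (intro Max_in) auto
  have jk: "j < k" "S (xs!j)" using jM by (auto simp: M_def)
  have between: "\<forall>m. j < m \<and> m < k \<longrightarrow> \<not> S (xs!m)"
  proof (intro allI impI)
    fix m assume "j < m \<and> m < k"
    moreover have "m \<in> M \<Longrightarrow> m \<le> j" using fM unfolding j_def by auto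
    ultimately show "\<not> S (xs!m)" by (auto simp: M_def)
  qed
  have "\<not> T (xs!j)"
  proof
    assume "T (xs!j)"
    then have "?K j" using jk Kk by auto
    then have "k \<le> j" unfolding k_def by (rule Least_le)
    then show False using jk by simp
  qed
  then show ?thesis using jk Kk between by blast
qed

lemma extract_sub:
  assumes "distinct xs" "xs \<noteq> []" "S (hd xs)" "\<not> T (hd xs)" "S (last xs)" "T (last xs)"
  shows "\<exists>ys. distinct ys \<and> 2 \<le> length ys \<and> set ys \<subseteq> set xs \<and> ledges ys \<subseteq> ledges xs \<and>
    S (hd ys) \<and> \<not> T (hd ys) \<and> S (last ys) \<and> T (last ys) \<and> (\<forall>v\<in>set ys. S v \<longrightarrow> v = hd ys \<or> v = last ys)"
proof -
  obtain j k where jk: "j < k" "k < length xs" "S (xs!j)" "\<not> T (xs!j)" "S (xs!k)" "T (xs!k)"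
    "\<forall>m. j < m \<and> m < k \<longrightarrow> \<not> S (xs!m)"
    using extract_idx[OF assms(2-6)] by blast
  define ys where "ys = take (Suc k - j) (drop j xs)"
  have len: "length ys = Suc k - j" using jk by (simp add: ys_def)
  have nth: "\<And>t. t < Suc k - j \<Longrightarrow> ys ! t = xs ! (j + t)" using jk by (simp add: ys_def)
  have ne: "ys \<noteq> []" using len jk by auto
  have hd: "hd ys = xs ! j" using nth[of 0] ne jk by (simp add: hd_conv_nth)
  have last: "last ys = xs ! k" using nth[of "k - j"] ne jk len by (simp add: last_conv_nth)
  have "distinct ys" using assms(1) by (simp add: ys_def)
  moreover have "2 \<le> length ys" using len jk by simp
  moreover have "set ys \<subseteq> set xs" unfolding ys_def by (meson in_set_dropD in_set_takeD subsetI)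
  moreover have "ledges ys \<subseteq> ledges xs" unfolding ys_def using ledges_take ledges_drop by blast
  moreover have "\<forall>v\<in>set ys. S v \<longrightarrow> v = hd ys \<or> v = last ys"
  proof (intro ballI impI)
    fix v assume "v \<in> set ys" "S v"
    then obtain t where t: "t < length ys" "v = ys ! t" by (auto simp: in_set_conv_nth)
    then have v: "v = xs ! (j + t)" using nth len by simp
    show "v = hd ys \<or> v = last ys"
    proof (cases "t = 0 \<or> j + t = k")
      case True then show ?thesis using v hd last by auto
    next
      case False
      then have "j < j + t" "j + t < k" using t len by auto
      then show ?thesis using jk(7) \<open>S v\<close> v by blast
    qed
  qed
  ultimately show ?thesis using hd last jk by (intro exI[of _ ys]) simp
qed

lemma extract_sub_rev:
  assumes "distinct xs" "xs \<noteq> []" "S (hd xs)" "\<not> T (hd xs)" "S (last xs)" "T (last xs)"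
  shows "\<exists>ys. distinct ys \<and> 2 \<le> length ys \<and> set ys \<subseteq> set xs \<and> ledges ys \<subseteq> ledges xs \<and>
    S (hd ys) \<and> T (hd ys) \<and> S (last ys) \<and> \<not> T (last ys) \<and> (\<forall>v\<in>set ys. S v \<longrightarrow> v = hd ys \<or> v = last ys)"
proof -
  obtain ys where ys: "distinct ys" "2 \<le> length ys" "set ys \<subseteq> set xs" "ledges ys \<subseteq> ledges xs"
    "S (hd ys)" "\<not> T (hd ys)" "S (last ys)" "T (last ys)" "\<forall>v\<in>set ys. S v \<longrightarrow> v = hd ys \<or> v = last ys"
    using extract_sub[OF assms] by blast
  have ne: "ys \<noteq> []" using ys(2) by auto
  show ?thesis
    by (rule exI[of _ "rev ys"]) (use ys ne in \<open>auto simp: ledges_rev hd_rev last_rev\<close>)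
qed



lemma key:
  assumes sg: "simple_graph V E" and pe: "plane_embedding V E pos \<gamma>"
    and fb: "face_bounded_by_cycle V E pos \<gamma> F cs"
    and ord: "i1 < i2" "i2 < i3" "i3 < i4" "i4 < length cs"
    and W13: "is_walk V (E - cycle_edges cs) W13" "distinct W13" "hd W13 = cs ! i1" "last W13 = cs ! i3"
    and W24: "is_walk V (E - cycle_edges cs) W24" "distinct W24" "hd W24 = cs ! i2" "last W24 = cs ! i4"
  shows "set W13 \<inter> set W24 \<noteq> {}"
proof
  assume disj: "set W13 \<inter> set W24 = {}"
  let ?n = "length cs"
  have Fc: "F \<in> components (- drawing V E pos \<gamma>)" and cyc: "is_cycle V E cs"
    and fr: "frontier F = drawing (set cs) (cycle_edges cs) pos \<gamma>"
    using fb by (auto simp: face_bounded_by_cycle_def)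
  have n3: "3 \<le> ?n" and dist: "distinct cs" and csV: "set cs \<subseteq> V" and ceE: "cycle_edges cs \<subseteq> E"
    using cyc by (auto simp: is_cycle_def)
  have nthinj: "\<And>i j. i < ?n \<Longrightarrow> j < ?n \<Longrightarrow> cs ! i = cs ! j \<longleftrightarrow> i = j"
    using nth_eq_iff_index_eq[OF dist] by blast
  have w13: "W13 \<noteq> []" "set W13 \<subseteq> V" "ledges W13 \<subseteq> E - cycle_edges cs" using W13(1) by (auto simp: is_walk_iff)
  have w24: "W24 \<noteq> []" "set W24 \<subseteq> V" "ledges W24 \<subseteq> E - cycle_edges cs" using W24(1) by (auto simp: is_walk_iff)
  have in13: "cs ! i1 \<in> set W13" "cs ! i3 \<in> set W13" using W13(3,4) w13(1) hd_in_set last_in_set by metis+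
  have in24: "cs ! i2 \<in> set W24" "cs ! i4 \<in> set W24" using W24(3,4) w24(1) hd_in_set last_in_set by metis+
  define S where "S = (\<lambda>v. v \<in> set cs)"
  define T1 where "T1 = (\<lambda>v. \<exists>i. i2 < i \<and> i < i4 \<and> v = cs ! i)"
  have "\<not> T1 (cs ! i1)"
  proof
    assume "T1 (cs ! i1)"
    then obtain i where "i2 < i" "i < i4" "cs ! i1 = cs ! i" by (auto simp: T1_def)
    then show False using nthinj[of i1 i] ord by auto
  qed
  moreover have "T1 (cs ! i3)" using ord by (auto simp: T1_def)
  moreover have "S (cs ! i1)" "S (cs ! i3)" using ord by (auto simp: S_def)
  ultimately obtain P0 where P0: "distinct P0" "2 \<le> length P0" "set P0 \<subseteq> set W13" "ledges P0 \<subseteq> ledges W13"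
    "S (hd P0)" "\<not> T1 (hd P0)" "S (last P0)" "T1 (last P0)" "\<forall>v\<in>set P0. S v \<longrightarrow> v = hd P0 \<or> v = last P0"
    using extract_sub[OF W13(2) w13(1), of S T1] W13(3,4) by auto
  have P0ne: "P0 \<noteq> []" using P0(2) by auto
  have hP0: "hd P0 \<in> set W13" "last P0 \<in> set W13" using P0(3) P0ne hd_in_set last_in_set by blast+
  obtain a where a: "a < ?n" "hd P0 = cs ! a" using P0(5) by (auto simp: S_def in_set_conv_nth)
  have a2: "\<not> (i2 < a \<and> a < i4)" using P0(6) a by (auto simp: T1_def)
  have a3: "a \<noteq> i2" "a \<noteq> i4" using disj hP0 a in24 by auto
  obtain b where b: "i2 < b" "b < i4" "last P0 = cs ! b" using P0(8) by (auto simp: T1_def)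
  obtain lo hi P where PP: "lo < hi" "hi < ?n" "hd P = cs ! lo" "last P = cs ! hi" "distinct P"
    "2 \<le> length P" "set P \<subseteq> set W13" "ledges P \<subseteq> ledges W13"
    "\<forall>v\<in>set P. S v \<longrightarrow> v = hd P \<or> v = last P"
    "(lo < i2 \<and> i2 < hi \<and> hi < i4) \<or> (i2 < lo \<and> lo < i4 \<and> i4 < hi)"
  proof (cases "a < i2")
    case True
    show ?thesis by (rule that[of a b P0]) (use True a b P0 ord in auto)
  next
    case False
    then have "i4 < a" using a2 a3 by auto
    show ?thesis by (rule that[of b a "rev P0"])
      (use \<open>i4 < a\<close> a b P0 P0ne ord in \<open>auto simp: hd_rev last_rev ledges_rev\<close>)
  qed
  have Pne: "P \<noteq> []" using PP(6) by auto
  have "hd P \<in> set P" "last P \<in> set P" using Pne by simp_all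
  then have hP: "cs ! lo \<in> set W13" "cs ! hi \<in> set W13" using PP(3,4,7) by auto
  define T2 where "T2 = (\<lambda>v. \<exists>i. lo < i \<and> i < hi \<and> v = cs ! i)"
  have notT2: "\<And>i. i < ?n \<Longrightarrow> \<not> (lo < i \<and> i < hi) \<Longrightarrow> \<not> T2 (cs ! i)"
  proof
    fix i assume i: "i < ?n" "\<not> (lo < i \<and> i < hi)" "T2 (cs ! i)"
    then obtain i' where "lo < i'" "i' < hi" "cs ! i = cs ! i'" by (auto simp: T2_def)
    then show False using nthinj[of i i'] i PP(2) by auto
  qed
  have S24: "S (cs ! i2)" "S (cs ! i4)" using ord by (auto simp: S_def)
  obtain Q where QQ: "distinct Q" "2 \<le> length Q" "set Q \<subseteq> set W24" "ledges Q \<subseteq> ledges W24"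
    "S (hd Q)" "T2 (hd Q)" "S (last Q)" "\<not> T2 (last Q)" "\<forall>v\<in>set Q. S v \<longrightarrow> v = hd Q \<or> v = last Q"
  proof (cases "lo < i2 \<and> i2 < hi \<and> hi < i4")
    case True
    have t: "T2 (cs ! i2)" using True by (auto simp: T2_def)
    have nt: "\<not> T2 (cs ! i4)" using notT2[of i4] True ord by auto
    have "distinct (rev W24)" "rev W24 \<noteq> []" using W24(2) w24(1) by auto
    from extract_sub_rev[OF this, of S T2] t nt S24 W24(3,4)
    show ?thesis using that by (auto simp: hd_rev last_rev ledges_rev)
  next
    case False
    then have F2: "i2 < lo \<and> lo < i4 \<and> i4 < hi" using PP(10) by auto
    have t: "T2 (cs ! i4)" using F2 by (auto simp: T2_def)
    have nt: "\<not> T2 (cs ! i2)" using notT2[of i2] F2 ord by auto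
    from extract_sub_rev[OF W24(2) w24(1), of S T2] t nt S24 W24(3,4)
    show ?thesis using that by auto
  qed
  have Qne: "Q \<noteq> []" using QQ(2) by auto
  have hQ: "hd Q \<in> set W24" "last Q \<in> set W24" using QQ(3) Qne hd_in_set last_in_set by blast+
  obtain r where r: "lo < r" "r < hi" "hd Q = cs ! r" using QQ(6) by (auto simp: T2_def)
  obtain s where s: "s < ?n" "last Q = cs ! s" using QQ(7) by (auto simp: S_def in_set_conv_nth)
  have s1: "\<not> (lo < s \<and> s < hi)" using QQ(8) s by (auto simp: T2_def)
  have s2: "s \<noteq> lo" "s \<noteq> hi" using disj hP hQ s by auto
  define L1 where "L1 = seg cs lo hi"
  define L2 where "L2 = seg cs hi (?n + lo)"
  note SC = split_cycle[OF dist n3 PP(1,2), folded L1_def L2_def]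
  have imgc: "img \<gamma> (cycle_edges cs) = drawing (set cs) (cycle_edges cs) pos \<gamma>"
  proof -
    have "pos ` set cs \<subseteq> img \<gamma> (cycle_edges cs)"
    proof
      fix z assume "z \<in> pos ` set cs"
      then obtain i where i: "i < ?n" "z = pos (cs ! i)" by (auto simp: in_set_conv_nth)
      have ce: "cedge cs i \<in> cycle_edges cs" using i by (auto simp: cycle_edges_cedge)
      have "pos (cs ! i) \<in> path_image (\<gamma> (cedge cs i))"
        by (rule pe_endpoint[OF pe]) (use ce ceE in \<open>auto simp: cedge_def\<close>)
      then show "z \<in> img \<gamma> (cycle_edges cs)" using ce i by (auto simp: img_def)
    qed
    then show ?thesis by (auto simp: img_def drawing_def)
  qed
  have fr': "frontier F = img \<gamma> (ledges L1) \<union> img \<gamma> (ledges L2)"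
  proof -
    have "img \<gamma> (ledges L1) \<union> img \<gamma> (ledges L2) = img \<gamma> (ledges L1 \<union> ledges L2)"
      unfolding img_def by blast
    then show ?thesis using fr imgc SC(16) by simp
  qed
  have L1s: "set L1 \<subseteq> V" "ledges L1 \<subseteq> E" "set L2 \<subseteq> V" "ledges L2 \<subseteq> E"
    using SC(14,16) csV ceE by blast+
  have cs_un: "set L1 \<union> set L2 = set cs" using SC(14) .
  show False
  proof (rule GT[OF sg pe Fc fr' SC(1,2) L1s(1,2) SC(3,4) SC(5,6) L1s(3,4) SC(7,8) SC(13,15)
        PP(5,6) _ _ PP(3,4) _ _ QQ(1,2) _ _ _ _ _ _])
    show "set P \<subseteq> V" using PP(7) w13(2) by blast
    show "ledges P \<subseteq> E" using PP(8) w13(3) by blast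
    show "ledges P \<inter> (ledges L1 \<union> ledges L2) = {}" using PP(8) w13(3) SC(16) by blast
    show "set P \<inter> (set L1 \<union> set L2) \<subseteq> {cs ! lo, cs ! hi}"
      using PP(9,3,4) cs_un by (auto simp: S_def)
    show "set Q \<subseteq> V" using QQ(3) w24(2) by blast
    show "ledges Q \<subseteq> E" using QQ(4) w24(3) by blast
    show "ledges Q \<inter> (ledges L1 \<union> ledges L2) = {}" using QQ(4) w24(3) SC(16) by blast
    show "set Q \<inter> (set L1 \<union> set L2) \<subseteq> {hd Q, last Q}"
      using QQ(9) cs_un by (auto simp: S_def)
    show "set P \<inter> set Q = {}" using PP(7) QQ(3) disj by blast
    have "hd Q \<in> set L1" unfolding SC(9) using r by auto
    moreover have "hd Q \<noteq> cs ! lo" "hd Q \<noteq> cs ! hi" using r nthinj[of r lo] nthinj[of r hi] PP(2) by auto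
    ultimately show "hd Q \<in> set L1 - {cs ! lo, cs ! hi}" by blast
    have "s < lo \<or> hi < s" using s1 s2 by auto
    then have "last Q \<in> set L2" unfolding SC(10) using s by auto
    moreover have "last Q \<noteq> cs ! lo" "last Q \<noteq> cs ! hi"
      using s s2 nthinj[of s lo] nthinj[of s hi] PP(1,2) by auto
    ultimately show "last Q \<in> set L2 - {cs ! lo, cs ! hi}" by blast
  qed
qed



lemma enat6: "(6::enat) = enat 6" by (simp add: numeral_eq_enat)

theorem proposition17:
  fixes V :: "'v set" and E :: "'v set set" and pos :: "'v \<Rightarrow> complex"
    and \<gamma> :: "'v set \<Rightarrow> real \<Rightarrow> complex" and F :: "complex set" and cs :: "'v list"
    and i1 i2 i3 i4 :: nat
  assumes "simple_graph V E"
    and "plane_embedding V E pos \<gamma>"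
    and "face_bounded_by_cycle V E pos \<gamma> F cs"
    and "i1 < i2" and "i2 < i3" and "i3 < i4" and "i4 < length cs"
    and "max (graph_dist V (E - cycle_edges cs) (cs ! i1) (cs ! i3))
             (graph_dist V (E - cycle_edges cs) (cs ! i2) (cs ! i4)) \<le> 6"
  shows "min (graph_dist V (E - cycle_edges cs) (cs ! i1) (cs ! i2))
             (graph_dist V (E - cycle_edges cs) (cs ! i3) (cs ! i4)) \<le> 6"
proof -
  let ?E = "E - cycle_edges cs"
  have d13: "graph_dist V ?E (cs ! i1) (cs ! i3) \<le> 6" and d24: "graph_dist V ?E (cs ! i2) (cs ! i4) \<le> 6"
    using assms(8) by auto
  obtain W13 where W13: "is_walk V ?E W13" "hd W13 = cs ! i1" "last W13 = cs ! i3"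
    "graph_dist V ?E (cs ! i1) (cs ! i3) = enat (length W13 - 1)"
  proof -
    have "graph_dist V ?E (cs ! i1) (cs ! i3) \<noteq> \<infinity>"
    proof
      assume "graph_dist V ?E (cs ! i1) (cs ! i3) = \<infinity>"
      then show False using d13 by (simp add: enat6)
    qed
    then show ?thesis using dist_attain[of V ?E "cs ! i1" "cs ! i3"] that by blast
  qed
  obtain W24 where W24: "is_walk V ?E W24" "hd W24 = cs ! i2" "last W24 = cs ! i4"
    "graph_dist V ?E (cs ! i2) (cs ! i4) = enat (length W24 - 1)"
  proof -
    have "graph_dist V ?E (cs ! i2) (cs ! i4) \<noteq> \<infinity>"
    proof
      assume "graph_dist V ?E (cs ! i2) (cs ! i4) = \<infinity>"
      then show False using d24 by (simp add: enat6)
    qed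
    then show ?thesis using dist_attain[of V ?E "cs ! i2" "cs ! i4"] that by blast
  qed
  have dist13: "distinct W13" using min_walk_distinct[OF W13(1)] W13 by simp
  have dist24: "distinct W24" using min_walk_distinct[OF W24(1)] W24 by simp
  have l13: "length W13 - 1 \<le> 6" using d13 W13(4) by (simp add: enat6)
  have l24: "length W24 - 1 \<le> 6" using d24 W24(4) by (simp add: enat6)
  have "set W13 \<inter> set W24 \<noteq> {}"
    by (rule key[OF assms(1-7) W13(1) dist13 W13(2,3) W24(1) dist24 W24(2,3)])
  then obtain w where "w \<in> set W13" "w \<in> set W24" by blast
  then obtain j k where jk: "j < length W13" "W13 ! j = w" "k < length W24" "W24 ! k = w"
    by (auto simp: in_set_conv_nth)
  have w13: "W13 \<noteq> []" "set W13 \<subseteq> V" "ledges W13 \<subseteq> ?E" using W13(1) by (auto simp: is_walk_iff)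
  have w24: "W24 \<noteq> []" "set W24 \<subseteq> V" "ledges W24 \<subseteq> ?E" using W24(1) by (auto simp: is_walk_iff)
  define X where "X = take j W13 @ w # rev (take k W24)"
  define Y where "Y = rev (drop (Suc j) W13) @ w # drop (Suc k) W24"
  have "ledges X = ledges (take j W13 @ [w]) \<union> ledges (w # rev (take k W24))"
    unfolding X_def by (rule ledges_append)
  also have "take j W13 @ [w] = take (Suc j) W13" using jk by (simp add: take_Suc_conv_app_nth)
  also have "w # rev (take k W24) = rev (take (Suc k) W24)" using jk by (simp add: take_Suc_conv_app_nth)
  finally have "ledges X \<subseteq> ledges W13 \<union> ledges W24"
    using ledges_take[of "Suc j" W13] ledges_take[of "Suc k" W24] by (simp add: ledges_rev) blast
  moreover have "set X \<subseteq> set W13 \<union> set W24" unfolding X_def using jk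
    by (auto dest: in_set_takeD)
  ultimately have wX: "is_walk V ?E X" using w13 w24 by (auto simp: is_walk_iff X_def)
  have hX: "hd X = cs ! i1"
  proof (cases j)
    case 0 then show ?thesis using jk W13(2) w13(1) by (simp add: X_def hd_conv_nth)
  next
    case (Suc j') then show ?thesis using jk W13(2) w13(1) by (cases W13) (simp_all add: X_def)
  qed
  have lX: "last X = cs ! i2"
  proof (cases k)
    case 0 then show ?thesis using jk W24(2) w24(1) by (simp add: X_def hd_conv_nth)
  next
    case (Suc k') then show ?thesis using jk W24(2) w24(1) by (cases W24) (simp_all add: X_def last_rev)
  qed
  have lenX: "length X - 1 = j + k" using jk by (simp add: X_def)
  have d12: "graph_dist V ?E (cs ! i1) (cs ! i2) \<le> enat (j + k)"
    using dist_le[OF wX hX lX] lenX by simp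
  have "ledges Y = ledges (rev (drop (Suc j) W13) @ [w]) \<union> ledges (w # drop (Suc k) W24)"
    unfolding Y_def by (rule ledges_append)
  also have "rev (drop (Suc j) W13) @ [w] = rev (drop j W13)"
  proof -
    have "drop j W13 = w # drop (Suc j) W13" using Cons_nth_drop_Suc[OF jk(1)] jk(2) by simp
    then show ?thesis by simp
  qed
  also have "w # drop (Suc k) W24 = drop k W24" using Cons_nth_drop_Suc[OF jk(3)] jk(4) by simp
  finally have "ledges Y \<subseteq> ledges W13 \<union> ledges W24"
    using ledges_drop[of j W13] ledges_drop[of k W24] by (simp add: ledges_rev) blast
  moreover have "set Y \<subseteq> set W13 \<union> set W24" unfolding Y_def using jk
    by (auto dest: in_set_dropD)
  ultimately have wY: "is_walk V ?E Y" using w13 w24 by (auto simp: is_walk_iff Y_def)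
  have hY: "hd Y = cs ! i3"
  proof (cases "drop (Suc j) W13 = []")
    case True
    then have "j = length W13 - 1" using jk by auto
    then have "w = last W13" using jk w13(1) by (simp add: last_conv_nth)
    then show ?thesis using True W13(3) by (simp add: Y_def)
  next
    case False
    then have "hd Y = last (drop (Suc j) W13)" by (simp add: Y_def hd_rev)
    also have "\<dots> = last W13" using False by (simp add: last_drop)
    finally show ?thesis using W13(3) by simp
  qed
  have lY: "last Y = cs ! i4"
  proof -
    have "last Y = last (w # drop (Suc k) W24)" by (simp add: Y_def)
    also have "w # drop (Suc k) W24 = drop k W24" using Cons_nth_drop_Suc[OF jk(3)] jk(4) by simp
    also have "last (drop k W24) = last W24" using jk by (simp add: last_drop)
    finally show ?thesis using W24(3) by simp
  qed
  have lenY: "length Y - 1 = (length W13 - Suc j) + (length W24 - Suc k)" by (simp add: Y_def)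
  have d34: "graph_dist V ?E (cs ! i3) (cs ! i4) \<le> enat ((length W13 - Suc j) + (length W24 - Suc k))"
    using dist_le[OF wY hY lY] lenY by simp
  show ?thesis
  proof (cases "j + k \<le> 6")
    case True
    then have "graph_dist V ?E (cs ! i1) (cs ! i2) \<le> 6"
      using d12 by (simp add: enat6) (meson enat_ord_simps(1) order_trans)
    then show ?thesis by (simp add: min.coboundedI1)
  next
    case False
    then have "(length W13 - Suc j) + (length W24 - Suc k) \<le> 6" using l13 l24 jk by linarith
    then have "graph_dist V ?E (cs ! i3) (cs ! i4) \<le> 6"
      using d34 by (simp add: enat6) (meson enat_ord_simps(1) order_trans)
    then show ?thesis by (simp add: min.coboundedI2)
  qed
qed


end
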